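(* For every $n\in\mathbb{N}_0$ and $m=1,\ldots,n+1$, \begin{align*} \mathbf{X}^{0,\dagger}_n&=r^n\Big[\tfrac{n+1}{2}U^0_n+\tfrac12U^1_n\mathbf{e}_1+\tfrac12V^1_n\mathbf{e}_2\Big],\\ \mathbf{X}^{m,\dagger}_n&=r^n\Big[\tfrac{n+m+1}{2}U^m_n+\tfrac14R^{m,-}_n\mathbf{e}_1+\tfrac14S^{m,+}_n\mathbf{e}_2\Big],\\ \mathbf{Y}^{m,\dagger}_n&=r^n\Big[\tfrac{n+m+1}{2}V^m_n+\tfrac14S^{m,-}_n\mathbf{e}_1-\tfrac14R^{m,+}_n\mathbf{e}_2\Big], \end{align*} where $R^{m,\pm}_n=U^{m+1}_n\pm(n+m+1)(n+m)U^{m-1}_n$ and $S^{m,\pm}_n=V^{m+1}_n\pm(n+m+1)(n+m)V^{m-1}_n$.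
   Context: Quaternions $\mathbb{H}$ have basis $1,\mathbf{e}_1,\mathbf{e}_2,\mathbf{e}_3$ with $\mathbf{e}_i^2=-1$, $\mathbf{e}_1\mathbf{e}_2=\mathbf{e}_3=-\mathbf{e}_2\mathbf{e}_1$, $\mathbf{e}_2\mathbf{e}_3=\mathbf{e}_1=-\mathbf{e}_3\mathbf{e}_2$, $\mathbf{e}_3\mathbf{e}_1=\mathbf{e}_2=-\mathbf{e}_1\mathbf{e}_3$. Reduced quaternions: $\mathcal{A}=\mathrm{span}_\mathbb{R}\{1,\mathbf{e}_1,\mathbf{e}_2\}$; $x=(x_0,x_1,x_2)\in\mathbb{R}^3$ is identified with $x_0+x_1\mathbf{e}_1+x_2\mathbf{e}_2$. $\overline{D}=\partial_{x_0}-\mathbf{e}_1\partial_{x_1}-\mathbf{e}_2\partial_{x_2}$. Spherical coordinates: $x_0=r\cos\theta_1$, $x_1=r\sin\theta_1\cos\theta_2$, $x_2=r\sin\theta_1\sin\theta_2$, $r>0$, $0<\theta_1\le\pi$, $0<\theta_2\le2\pi$. $P_n$ is the Legendre polynomial, $P^m_n(t)=(1-t^2)^{m/2}\frac{d^m}{dt^m}P_n(t)$ the associated Legendre function ($P^0_n=P_n$), with $P^i_n\equiv0$ for $i\ge n+1$. $T_k$, $U_k$ are the Chebyshev polynomials of the first and second kind, with $U_{-1}=0$. Spherical harmonics: $U^l_{n}(\theta_1,\theta_2)=P^l_{n}(\cos\theta_1)T_l(\cos\theta_2)$, $V^m_{n}(\theta_1,\theta_2)=P^m_{n}(\cos\theta_1)\sin\theta_2\,U_{m-1}(\cos\theta_2)$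 (so $V^0_n=0$), and $U^l_n=V^l_n=0$ for $l\ge n+1$. The basis polynomials are $\mathbf{X}^{l,\dagger}_n:=\tfrac12\overline{D}\big(r^{n+1}U^l_{n+1}\big)$, $l=0,\ldots,n+1$, and $\mathbf{Y}^{m,\dagger}_n:=\tfrac12\overline{D}\big(r^{n+1}V^m_{n+1}\big)$, $m=1,\ldots,n+1$. *)

theory Defs
  imports "HOL-Analysis.Analysis" "HOL-Computational_Algebra.Polynomial"
begin

fun legendre :: "nat \<Rightarrow> real poly" where
  "legendre 0 = 1"
| "legendre (Suc 0) = [:0, 1:]"
| "legendre (Suc (Suc k)) =
     smult (1 / real (k + 2))
       (smult (real (2 * k + 3)) ([:0, 1:] * legendre (Suc k)) - smult (real (k + 1)) (legendre k))"

definition assoc_legendre :: "nat \<Rightarrow> nat \<Rightarrow> real \<Rightarrow> real" where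
  "assoc_legendre m n t = sqrt (1 - t\<^sup>2) ^ m * poly ((pderiv ^^ m) (legendre n)) t"

fun chebT :: "nat \<Rightarrow> real poly" where
  "chebT 0 = 1"
| "chebT (Suc 0) = [:0, 1:]"
| "chebT (Suc (Suc k)) = [:0, 2:] * chebT (Suc k) - chebT k"

fun chebU :: "nat \<Rightarrow> real poly" where
  "chebU 0 = 1"
| "chebU (Suc 0) = [:0, 2:]"
| "chebU (Suc (Suc k)) = [:0, 2:] * chebU (Suc k) - chebU k"

(* spherical harmonics U^l_n and V^m_n (V^0_n = 0 since U_{-1} = 0) *)
definition SU :: "nat \<Rightarrow> nat \<Rightarrow> real \<Rightarrow> real \<Rightarrow> real" where
  "SU l n th1 th2 = assoc_legendre l n (cos th1) * poly (chebT l) (cos th2)"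

definition SV :: "nat \<Rightarrow> nat \<Rightarrow> real \<Rightarrow> real \<Rightarrow> real" where
  "SV m n th1 th2 =
     (if m = 0 then 0 else assoc_legendre m n (cos th1) * sin th2 * poly (chebU (m - 1)) (cos th2))"

(* spherical coordinates of a point x = (x0,x1,x2) of R^3:
   r = |x|, theta1 in [0,pi], theta2 in (0,2pi] *)
definition sph_r :: "real \<Rightarrow> real \<Rightarrow> real \<Rightarrow> real" where
  "sph_r x0 x1 x2 = sqrt (x0\<^sup>2 + x1\<^sup>2 + x2\<^sup>2)"

definition sph_theta1 :: "real \<Rightarrow> real \<Rightarrow> real \<Rightarrow> real" where
  "sph_theta1 x0 x1 x2 = arccos (x0 / sph_r x0 x1 x2)"

definition sph_theta2 :: "real \<Rightarrow> real \<Rightarrow> real \<Rightarrow> real" where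
  "sph_theta2 x0 x1 x2 =
     (let rho = sqrt (x1\<^sup>2 + x2\<^sup>2) in
      if x2 > 0 then arccos (x1 / rho) else 2 * pi - arccos (x1 / rho))"

(* Reduced quaternions a0 + a1 e1 + a2 e2 are represented as triples (a0,a1,a2)
   (a real vector space, componentwise).  For a real-valued function f,
   Dbar f = d f/dx0 - e1 d f/dx1 - e2 d f/dx2. *)
definition Dbar :: "(real \<Rightarrow> real \<Rightarrow> real \<Rightarrow> real) \<Rightarrow> real \<Rightarrow> real \<Rightarrow> real \<Rightarrow> real \<times> real \<times> real" where
  "Dbar f x0 x1 x2 =
     (deriv (\<lambda>t. f t x1 x2) x0, - deriv (\<lambda>t. f x0 t x2) x1, - deriv (\<lambda>t. f x0 x1 t) x2)"

definition solidU :: "nat \<Rightarrow> nat \<Rightarrow> real \<Rightarrow> real \<Rightarrow> real \<Rightarrow> real" where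
  "solidU l n x0 x1 x2 =
     sph_r x0 x1 x2 ^ n * SU l n (sph_theta1 x0 x1 x2) (sph_theta2 x0 x1 x2)"

definition solidV :: "nat \<Rightarrow> nat \<Rightarrow> real \<Rightarrow> real \<Rightarrow> real \<Rightarrow> real" where
  "solidV m n x0 x1 x2 =
     sph_r x0 x1 x2 ^ n * SV m n (sph_theta1 x0 x1 x2) (sph_theta2 x0 x1 x2)"

definition Xdag :: "nat \<Rightarrow> nat \<Rightarrow> real \<Rightarrow> real \<Rightarrow> real \<Rightarrow> real \<times> real \<times> real" where
  "Xdag l n x0 x1 x2 = (1/2) *\<^sub>R Dbar (solidU l (n + 1)) x0 x1 x2"

definition Ydag :: "nat \<Rightarrow> nat \<Rightarrow> real \<Rightarrow> real \<Rightarrow> real \<Rightarrow> real \<times> real \<times> real" where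
  "Ydag m n x0 x1 x2 = (1/2) *\<^sub>R Dbar (solidV m (n + 1)) x0 x1 x2"

end

theory Submission
  imports Defs
begin


abbreviation PD :: "nat \<Rightarrow> nat \<Rightarrow> real poly" where
  "PD j k \<equiv> (pderiv ^^ j) (legendre k)"

lemma legendre_rec_pt:
  "poly (legendre (Suc (Suc k))) t * (real k + 2) =
     (2 * real k + 3) * t * poly (legendre (Suc k)) t - (real k + 1) * poly (legendre k) t"
  by (simp add: field_simps)

lemma legendre_rec_der:
  "poly (pderiv (legendre (Suc (Suc k)))) t * (real k + 2) =
     (2 * real k + 3) * (poly (legendre (Suc k)) t + t * poly (pderiv (legendre (Suc k))) t)
       - (real k + 1) * poly (pderiv (legendre k)) t"
  by (simp add: pderiv_smult pderiv_diff pderiv_mult pderiv_pCons field_simps)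

lemma I12:
  "(\<forall>t. t * poly (pderiv (legendre (Suc k))) t - poly (pderiv (legendre k)) t = (real k + 1) * poly (legendre (Suc k)) t)
   \<and> (\<forall>t. poly (pderiv (legendre (Suc k))) t - t * poly (pderiv (legendre k)) t = (real k + 1) * poly (legendre k) t)"
proof (induction k)
  case 0
  then show ?case by (simp add: pderiv_pCons)
next
  case (Suc k)
  show ?case
  proof (intro conjI allI)
    fix t
    have h1: "t * poly (pderiv (legendre (Suc k))) t - poly (pderiv (legendre k)) t = (real k + 1) * poly (legendre (Suc k)) t"
      and h2: "poly (pderiv (legendre (Suc k))) t - t * poly (pderiv (legendre k)) t = (real k + 1) * poly (legendre k) t"
      using Suc by auto
    note r1 = legendre_rec_pt[of k t] and r2 = legendre_rec_der[of k t]
    have k2: "real k + 2 \<noteq> 0" by simp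
    have i2: "poly (pderiv (legendre (Suc (Suc k)))) t - t * poly (pderiv (legendre (Suc k))) t = (real (Suc k) + 1) * poly (legendre (Suc k)) t"
    proof -
      have "(poly (pderiv (legendre (Suc (Suc k)))) t - t * poly (pderiv (legendre (Suc k))) t) * (real k + 2)
          = ((real (Suc k) + 1) * poly (legendre (Suc k)) t) * (real k + 2)"
        using r2 h1 by (simp add: algebra_simps) algebra
      then show ?thesis using k2 by simp
    qed
    show "poly (pderiv (legendre (Suc (Suc k)))) t - t * poly (pderiv (legendre (Suc k))) t = (real (Suc k) + 1) * poly (legendre (Suc k)) t"
      by (rule i2)
    show "t * poly (pderiv (legendre (Suc (Suc k)))) t - poly (pderiv (legendre (Suc k))) t = (real (Suc k) + 1) * poly (legendre (Suc (Suc k))) t"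
    proof -
      have "(t * poly (pderiv (legendre (Suc (Suc k)))) t - poly (pderiv (legendre (Suc k))) t) * (real k + 2)
          = ((real (Suc k) + 1) * poly (legendre (Suc (Suc k))) t) * (real k + 2)"
        using r1 i2 h1 h2 by (simp add: algebra_simps) algebra
      then show ?thesis using k2 by simp
    qed
  qed
qed

lemma pderiv_zero_pt: "(\<And>t. poly p t = 0) \<Longrightarrow> poly (pderiv p) t = (0::real)"
proof -
  assume "\<And>t. poly p t = 0"
  then have "p = 0" using poly_all_0_iff_0[of p] by auto
  then show ?thesis by simp
qed

lemma PD_Suc: "PD (Suc j) k = pderiv (PD j k)" by simp

lemma pderiv_X_mult: "pderiv ([:0,1:] * p) = p + [:0,1:] * pderiv (p::real poly)"
  by (simp add: pderiv_mult pderiv_pCons)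

lemma Bj_step:
  assumes IH: "\<And>t. t * poly (PD (Suc j) (Suc k)) t + real j * poly (PD j (Suc k)) t - poly (PD (Suc j) k) t
     = (real k + 1) * poly (PD j (Suc k)) t"
  shows "t * poly (PD (Suc (Suc j)) (Suc k)) t + real (Suc j) * poly (PD (Suc j) (Suc k)) t - poly (PD (Suc (Suc j)) k) t
     = (real k + 1) * poly (PD (Suc j) (Suc k)) t"
proof -
  let ?E = "[:0,1:] * PD (Suc j) (Suc k) + smult (real j) (PD j (Suc k)) - PD (Suc j) k
     - smult (real k + 1) (PD j (Suc k))"
  have "poly ?E s = 0" for s
  proof -
    have "poly ?E s = (s * poly (PD (Suc j) (Suc k)) s + real j * poly (PD j (Suc k)) s - poly (PD (Suc j) k) s)
       - (real k + 1) * poly (PD j (Suc k)) s"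
      by (simp only: poly_add poly_diff poly_mult poly_smult poly_pCons poly_0 mult_zero_right add_0_left add_0_right mult_1_right)
    then show ?thesis using IH[of s] by linarith
  qed
  then have h: "poly (pderiv ?E) t = 0" by (rule pderiv_zero_pt)
  have e: "pderiv ?E = [:0,1:] * PD (Suc (Suc j)) (Suc k) + PD (Suc j) (Suc k) + smult (real j) (PD (Suc j) (Suc k)) - PD (Suc (Suc j)) k
     - smult (real k + 1) (PD (Suc j) (Suc k))"
    by (simp only: pderiv_add pderiv_diff pderiv_smult pderiv_X_mult PD_Suc)
  have "poly ([:0,1:] * PD (Suc (Suc j)) (Suc k) + PD (Suc j) (Suc k) + smult (real j) (PD (Suc j) (Suc k)) - PD (Suc (Suc j)) k
     - smult (real k + 1) (PD (Suc j) (Suc k))) t = 0" using h by (simp only: e)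
  then have "t * poly (PD (Suc (Suc j)) (Suc k)) t + poly (PD (Suc j) (Suc k)) t + real j * poly (PD (Suc j) (Suc k)) t
     - poly (PD (Suc (Suc j)) k) t - (real k + 1) * poly (PD (Suc j) (Suc k)) t = 0"
    by (simp only: poly_add poly_diff poly_mult poly_smult poly_pCons poly_0 mult_zero_right add_0_left add_0_right mult_1_right)
  then show ?thesis by (simp only: of_nat_Suc distrib_right mult_1_left)
qed
lemma Bj:
  "t * poly (PD (Suc j) (Suc k)) t + real j * poly (PD j (Suc k)) t - poly (PD (Suc j) k) t
     = (real k + 1) * poly (PD j (Suc k)) t"
proof (induction j arbitrary: t)
  case 0
  then show ?case using I12[of k] by simp
next
  case (Suc j)
  then show ?case by (rule Bj_step)
qed

lemma I2j_step:
  assumes IH: "\<And>t. poly (PD (Suc j) (Suc k)) t - t * poly (PD (Suc j) k) t - real j * poly (PD j k) t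
     = (real k + 1) * poly (PD j k) t"
  shows "poly (PD (Suc (Suc j)) (Suc k)) t - t * poly (PD (Suc (Suc j)) k) t - real (Suc j) * poly (PD (Suc j) k) t
     = (real k + 1) * poly (PD (Suc j) k) t"
proof -
  let ?E = "PD (Suc j) (Suc k) - [:0,1:] * PD (Suc j) k - smult (real j) (PD j k)
     - smult (real k + 1) (PD j k)"
  have "poly ?E s = 0" for s
  proof -
    have "poly ?E s = (poly (PD (Suc j) (Suc k)) s - s * poly (PD (Suc j) k) s - real j * poly (PD j k) s)
       - (real k + 1) * poly (PD j k) s"
      by (simp only: poly_add poly_diff poly_mult poly_smult poly_pCons poly_0 mult_zero_right add_0_left add_0_right mult_1_right)
    then show ?thesis using IH[of s] by linarith
  qed
  then have h: "poly (pderiv ?E) t = 0" by (rule pderiv_zero_pt)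
  have e: "pderiv ?E = PD (Suc (Suc j)) (Suc k) - (PD (Suc j) k + [:0,1:] * PD (Suc (Suc j)) k) - smult (real j) (PD (Suc j) k)
     - smult (real k + 1) (PD (Suc j) k)"
    by (simp only: pderiv_add pderiv_diff pderiv_smult pderiv_X_mult PD_Suc)
  have "poly (PD (Suc (Suc j)) (Suc k) - (PD (Suc j) k + [:0,1:] * PD (Suc (Suc j)) k) - smult (real j) (PD (Suc j) k)
     - smult (real k + 1) (PD (Suc j) k)) t = 0" using h by (simp only: e)
  then have "poly (PD (Suc (Suc j)) (Suc k)) t - (poly (PD (Suc j) k) t + t * poly (PD (Suc (Suc j)) k) t) - real j * poly (PD (Suc j) k) t
     - (real k + 1) * poly (PD (Suc j) k) t = 0"
    by (simp only: poly_add poly_diff poly_mult poly_smult poly_pCons poly_0 mult_zero_right add_0_left add_0_right mult_1_right)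
  then show ?thesis by (simp only: of_nat_Suc distrib_right mult_1_left)
qed

lemma I2j:
  "poly (PD (Suc j) (Suc k)) t - t * poly (PD (Suc j) k) t - real j * poly (PD j k) t
     = (real k + 1) * poly (PD j k) t"
proof (induction j arbitrary: t)
  case 0
  then show ?case using I12[of k] by simp
next
  case (Suc j)
  then show ?case by (rule I2j_step)
qed

lemma Aj:
  "(real (Suc k) - real j) * t * poly (PD j (Suc k)) t + (1 - t^2) * poly (PD (Suc j) (Suc k)) t
     = (real (Suc k) + real j) * poly (PD j k) t"
proof -
  define a where "a = poly (PD (Suc j) (Suc k)) t"
  define b where "b = poly (PD j (Suc k)) t"
  define c where "c = poly (PD (Suc j) k) t"
  define d where "d = poly (PD j k) t"
  have B: "t * a + real j * b - c = (real k + 1) * b" using Bj[of t j k] unfolding a_def b_def c_def .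
  have I: "a - t * c - real j * d = (real k + 1) * d" using I2j[of j k t] unfolding a_def c_def d_def .
  have "(real k + 1 - real j) * t * b + (1 - t^2) * a - (real k + 1 + real j) * d
      = (a - t * c - real j * d - (real k + 1) * d) - t * (t * a + real j * b - c - (real k + 1) * b)"
    by (simp add: algebra_simps power2_eq_square)
  also have "\<dots> = 0" using B I by simp
  finally show ?thesis unfolding a_def b_def c_def d_def by (simp add: ac_simps)
qed

lemma degree_legendre: "degree (legendre k) \<le> k"
proof (induction k rule: legendre.induct)
  case 1 then show ?case by simp
next
  case 2 then show ?case by simp
next
  case (3 k)
  have d0: "degree ([:0,1:] * legendre (Suc k)) \<le> Suc (Suc k)"
    using degree_mult_le[of "[:0,1:]" "legendre (Suc k)"] 3 by simp
  have d1: "degree (smult (real (2 * k + 3)) ([:0, 1:] * legendre (Suc k))) \<le> Suc (Suc k)"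
    using degree_smult_le d0 order_trans by blast
  have d2: "degree (smult (real (k + 1)) (legendre k)) \<le> Suc (Suc k)"
    using degree_smult_le 3 order_trans le_SucI by blast
  have "degree (smult (real (2 * k + 3)) ([:0, 1:] * legendre (Suc k)) - smult (real (k + 1)) (legendre k)) \<le> Suc (Suc k)"
    using d1 d2 degree_diff_le by blast
  then show ?case
    using degree_smult_le order_trans by (simp only: legendre.simps) blast
qed

lemma funpow_pderiv_0: "(pderiv ^^ j) 0 = (0::real poly)"
  by (induction j) auto

lemma funpow_pderiv_high: "degree p < j \<Longrightarrow> (pderiv ^^ j) (p::real poly) = 0"
proof (induction j arbitrary: p)
  case 0 then show ?case by simp
next
  case (Suc j)
  have e: "(pderiv ^^ Suc j) p = (pderiv ^^ j) (pderiv p)" by (simp only: funpow_Suc_right o_apply)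
  show ?case
  proof (cases "degree p = 0")
    case True
    then have "pderiv p = 0" by (simp add: pderiv_eq_0_iff)
    then show ?thesis using e funpow_pderiv_0 by simp
  next
    case False
    then have "degree (pderiv p) < j" using Suc.prems by (simp add: degree_pderiv)
    then show ?thesis using e Suc.IH by simp
  qed
qed

lemma PD_high: "k < j \<Longrightarrow> PD j k = 0"
  using funpow_pderiv_high degree_legendre le_less_trans by blast



lemma pow_pred_eq: "(r::real) \<noteq> 0 \<Longrightarrow> real e * r ^ (e - Suc 0) = real e * r ^ e / r"
  by (cases e) auto

lemma alg0:
  fixes r x0 e a b P P' :: real
  assumes "r > 0" "e * b = e * a / r"
  shows "e * (inverse r * x0 * b) * P + (r - x0 * (inverse r * x0)) * P' * a / r^2
       = a * (e * x0 * P / r + (1 - (x0 / r)^2) * P') / r"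
proof -
  have 1: "e * (inverse r * x0 * b) = x0 * e * a / r^2"
    using assms by (auto simp: field_simps power2_eq_square)
  show ?thesis unfolding 1 using assms(1) by (simp add: field_simps power2_eq_square)
qed

lemma alg1:
  fixes r x0 x1 e a b P P' :: real
  assumes "r > 0" "e * b = e * a / r"
  shows "e * (inverse r * x1 * b) * P - x0 * (inverse r * x1) * P' * a / r^2
       = x1 * a * (e * P - x0 * P' / r) / r^2"
proof -
  have 1: "e * (inverse r * x1 * b) = x1 * e * a / r^2"
    using assms by (auto simp: field_simps power2_eq_square)
  show ?thesis unfolding 1 using assms(1) by (simp add: field_simps power2_eq_square)
qed

lemma dG0:
  assumes r: "r = sqrt (x0^2 + x1^2 + x2^2)" and pos: "r > 0"
  shows "((\<lambda>s. sqrt (s^2 + x1^2 + x2^2) ^ e * poly q (s / sqrt (s^2 + x1^2 + x2^2))) has_real_derivative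
     (r ^ e / r) * (real e * (x0/r) * poly q (x0/r) + (1 - (x0/r)^2) * poly (pderiv q) (x0/r))) (at x0)"
proof -
  have p: "x0^2 + x1^2 + x2^2 > 0" using pos unfolding r by simp
  have p': "x0^2 + x1^2 + x2^2 \<noteq> 0" "\<not> x0^2 + x1^2 + x2^2 < 0" using p by auto
  have X: "x0^2 + x1^2 + x2^2 = r^2" using r p by simp
  show ?thesis
    apply (rule derivative_eq_intros refl | simp add: p p')+
    apply (unfold r[symmetric] X)
    using alg0[OF pos pow_pred_eq[of r e]] pos by simp
qed
lemma dG1:
  assumes r: "r = sqrt (x0^2 + x1^2 + x2^2)" and pos: "r > 0"
  shows "((\<lambda>s. sqrt (x0^2 + s^2 + x2^2) ^ e * poly q (x0 / sqrt (x0^2 + s^2 + x2^2))) has_real_derivative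
     x1 * (r ^ e / r^2) * (real e * poly q (x0/r) - (x0/r) * poly (pderiv q) (x0/r))) (at x1)"
proof -
  have p: "x0^2 + x1^2 + x2^2 > 0" using pos unfolding r by simp
  have p': "x0^2 + x1^2 + x2^2 \<noteq> 0" "\<not> x0^2 + x1^2 + x2^2 < 0" using p by auto
  have X: "x0^2 + x1^2 + x2^2 = r^2" using r p by simp
  show ?thesis
    apply (rule derivative_eq_intros refl | simp add: p p')+
    apply (unfold r[symmetric] X)
    using alg1[OF pos pow_pred_eq[of r e]] pos by simp
qed

lemma dG2:
  assumes r: "r = sqrt (x0^2 + x1^2 + x2^2)" and pos: "r > 0"
  shows "((\<lambda>s. sqrt (x0^2 + x1^2 + s^2) ^ e * poly q (x0 / sqrt (x0^2 + x1^2 + s^2))) has_real_derivative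
     x2 * (r ^ e / r^2) * (real e * poly q (x0/r) - (x0/r) * poly (pderiv q) (x0/r))) (at x2)"
proof -
  have p: "x0^2 + x1^2 + x2^2 > 0" using pos unfolding r by simp
  have p': "x0^2 + x1^2 + x2^2 \<noteq> 0" "\<not> x0^2 + x1^2 + x2^2 < 0" using p by auto
  have X: "x0^2 + x1^2 + x2^2 = r^2" using r p by simp
  show ?thesis
    apply (rule derivative_eq_intros refl | simp add: p p')+
    apply (unfold r[symmetric] X)
    using alg1[OF pos pow_pred_eq[of r e]] pos by simp
qed


definition G :: "nat \<Rightarrow> nat \<Rightarrow> real \<Rightarrow> real \<Rightarrow> real \<Rightarrow> real" where
  "G k j x0 x1 x2 = sph_r x0 x1 x2 ^ (k - j) * poly (PD j k) (x0 / sph_r x0 x1 x2)"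

lemma G_d0:
  assumes pos: "sph_r x0 x1 x2 > 0" and j: "j \<le> Suc k"
  shows "((\<lambda>s. G (Suc k) j s x1 x2) has_real_derivative ((real (Suc k) + real j) * G k j x0 x1 x2)) (at x0)"
proof -
  define r where "r = sph_r x0 x1 x2"
  define t where "t = x0 / r"
  have rpos: "r > 0" using pos r_def by simp
  have d: "((\<lambda>s. G (Suc k) j s x1 x2) has_real_derivative
     (r ^ (Suc k - j) / r) * (real (Suc k - j) * t * poly (PD j (Suc k)) t + (1 - t^2) * poly (pderiv (PD j (Suc k))) t)) (at x0)"
    unfolding G_def sph_r_def t_def
    by (rule dG0) (use rpos in \<open>simp_all add: r_def sph_r_def\<close>)
  have A: "real (Suc k - j) * t * poly (PD j (Suc k)) t + (1 - t^2) * poly (pderiv (PD j (Suc k))) t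
      = (real (Suc k) + real j) * poly (PD j k) t"
    using Aj[of k j t] j by (simp add: of_nat_diff)
  have "(r ^ (Suc k - j) / r) * ((real (Suc k) + real j) * poly (PD j k) t) = (real (Suc k) + real j) * G k j x0 x1 x2"
  proof (cases "j \<le> k")
    case True
    then have "Suc k - j = Suc (k - j)" by simp
    then show ?thesis using rpos unfolding G_def r_def[symmetric] t_def[symmetric] by simp
  next
    case False
    then have "PD j k = 0" using PD_high by simp
    then show ?thesis unfolding G_def by simp
  qed
  with d A show ?thesis by simp
qed

lemma G_d1:
  assumes pos: "sph_r x0 x1 x2 > 0" and j: "j \<le> Suc k"
  shows "((\<lambda>s. G (Suc k) j x0 s x2) has_real_derivative (- x1 * G k (Suc j) x0 x1 x2)) (at x1)"
proof -
  define r where "r = sph_r x0 x1 x2"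
  define t where "t = x0 / r"
  have rpos: "r > 0" using pos r_def by simp
  have d: "((\<lambda>s. G (Suc k) j x0 s x2) has_real_derivative
     x1 * (r ^ (Suc k - j) / r^2) * (real (Suc k - j) * poly (PD j (Suc k)) t - t * poly (pderiv (PD j (Suc k))) t)) (at x1)"
    unfolding G_def sph_r_def t_def
    by (rule dG1) (use rpos in \<open>simp_all add: r_def sph_r_def\<close>)
  have B: "real (Suc k - j) * poly (PD j (Suc k)) t - t * poly (pderiv (PD j (Suc k))) t
      = - poly (PD (Suc j) k) t"
    using Bj[of t j k] j by (simp add: of_nat_diff algebra_simps)
  have "x1 * (r ^ (Suc k - j) / r^2) * (- poly (PD (Suc j) k) t) = - x1 * G k (Suc j) x0 x1 x2"
  proof (cases "Suc j \<le> k")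
    case True
    then have "Suc k - j = Suc (Suc (k - Suc j))" by simp
    then show ?thesis using rpos unfolding G_def r_def[symmetric] t_def[symmetric] by (simp add: power2_eq_square)
  next
    case False
    have lt: "k < Suc j" using False by simp
    have "PD (Suc j) k = 0" by (rule PD_high[OF lt])
    then show ?thesis unfolding G_def by simp
  qed
  with d B show ?thesis by simp
qed

lemma G_d2:
  assumes pos: "sph_r x0 x1 x2 > 0" and j: "j \<le> Suc k"
  shows "((\<lambda>s. G (Suc k) j x0 x1 s) has_real_derivative (- x2 * G k (Suc j) x0 x1 x2)) (at x2)"
proof -
  define r where "r = sph_r x0 x1 x2"
  define t where "t = x0 / r"
  have rpos: "r > 0" using pos r_def by simp
  have d: "((\<lambda>s. G (Suc k) j x0 x1 s) has_real_derivative
     x2 * (r ^ (Suc k - j) / r^2) * (real (Suc k - j) * poly (PD j (Suc k)) t - t * poly (pderiv (PD j (Suc k))) t)) (at x2)"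
    unfolding G_def sph_r_def t_def
    by (rule dG2) (use rpos in \<open>simp_all add: r_def sph_r_def\<close>)
  have B: "real (Suc k - j) * poly (PD j (Suc k)) t - t * poly (pderiv (PD j (Suc k))) t
      = - poly (PD (Suc j) k) t"
    using Bj[of t j k] j by (simp add: of_nat_diff algebra_simps)
  have "x2 * (r ^ (Suc k - j) / r^2) * (- poly (PD (Suc j) k) t) = - x2 * G k (Suc j) x0 x1 x2"
  proof (cases "Suc j \<le> k")
    case True
    then have "Suc k - j = Suc (Suc (k - Suc j))" by simp
    then show ?thesis using rpos unfolding G_def r_def[symmetric] t_def[symmetric] by (simp add: power2_eq_square)
  next
    case False
    have lt: "k < Suc j" using False by simp
    have "PD (Suc j) k = 0" by (rule PD_high[OF lt])
    then show ?thesis unfolding G_def by simp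
  qed
  with d B show ?thesis by simp
qed


definition CC :: "nat \<Rightarrow> real \<Rightarrow> real \<Rightarrow> real" where
  "CC l a b = Re (Complex a b ^ l)"
definition DD :: "nat \<Rightarrow> real \<Rightarrow> real \<Rightarrow> real" where
  "DD l a b = Im (Complex a b ^ l)"

lemma CC_0[simp]: "CC 0 a b = 1" and DD_0[simp]: "DD 0 a b = 0"
  by (simp_all add: CC_def DD_def)

lemma CC_Suc: "CC (Suc l) a b = a * CC l a b - b * DD l a b"
  and DD_Suc: "DD (Suc l) a b = b * CC l a b + a * DD l a b"
  by (simp_all add: CC_def DD_def algebra_simps)

lemma CC_rec: "CC (Suc (Suc l)) a b = 2 * a * CC (Suc l) a b - (a^2 + b^2) * CC l a b"
  unfolding CC_Suc DD_Suc by (simp add: algebra_simps power2_eq_square)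

lemma DD_rec: "DD (Suc (Suc l)) a b = 2 * a * DD (Suc l) a b - (a^2 + b^2) * DD l a b"
  unfolding CC_Suc DD_Suc by (simp add: algebra_simps power2_eq_square)

lemma CC_da: "((\<lambda>s. CC l s b) has_real_derivative (real l * CC (l - 1) a b)) (at a)"
proof -
  have "((\<lambda>w. (w + \<i> * of_real b) ^ l) has_field_derivative
      (of_nat l * (of_real a + \<i> * of_real b) ^ (l - 1) * 1)) (at (of_real a))"
    by (auto intro!: derivative_eq_intros)
  then have "((\<lambda>s. (of_real s + \<i> * of_real b) ^ l) has_vector_derivative
      (of_nat l * (of_real a + \<i> * of_real b) ^ (l - 1) * 1)) (at a)"
    by (rule has_vector_derivative_real_field)
  then have "((\<lambda>s. Re ((of_real s + \<i> * of_real b) ^ l)) has_field_derivative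
      Re (of_nat l * (of_real a + \<i> * of_real b) ^ (l - 1) * 1)) (at a)"
    by (rule has_field_derivative_Re)
  then show ?thesis unfolding CC_def Complex_eq by simp
qed

lemma CC_db: "((\<lambda>s. CC l a s) has_real_derivative (- real l * DD (l - 1) a b)) (at b)"
proof -
  have "((\<lambda>w. (of_real a + \<i> * w) ^ l) has_field_derivative
      (of_nat l * (of_real a + \<i> * of_real b) ^ (l - 1) * \<i>)) (at (of_real b))"
    by (auto intro!: derivative_eq_intros)
  then have "((\<lambda>s. (of_real a + \<i> * of_real s) ^ l) has_vector_derivative
      (of_nat l * (of_real a + \<i> * of_real b) ^ (l - 1) * \<i>)) (at b)"
    by (rule has_vector_derivative_real_field)
  then have "((\<lambda>s. Re ((of_real a + \<i> * of_real s) ^ l)) has_field_derivative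
      Re (of_nat l * (of_real a + \<i> * of_real b) ^ (l - 1) * \<i>)) (at b)"
    by (rule has_field_derivative_Re)
  then show ?thesis unfolding CC_def DD_def Complex_eq by simp
qed

lemma DD_da: "((\<lambda>s. DD l s b) has_real_derivative (real l * DD (l - 1) a b)) (at a)"
proof -
  have "((\<lambda>w. (w + \<i> * of_real b) ^ l) has_field_derivative
      (of_nat l * (of_real a + \<i> * of_real b) ^ (l - 1) * 1)) (at (of_real a))"
    by (auto intro!: derivative_eq_intros)
  then have "((\<lambda>s. (of_real s + \<i> * of_real b) ^ l) has_vector_derivative
      (of_nat l * (of_real a + \<i> * of_real b) ^ (l - 1) * 1)) (at a)"
    by (rule has_vector_derivative_real_field)
  then have "((\<lambda>s. Im ((of_real s + \<i> * of_real b) ^ l)) has_field_derivative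
      Im (of_nat l * (of_real a + \<i> * of_real b) ^ (l - 1) * 1)) (at a)"
    by (rule has_field_derivative_Im)
  then show ?thesis unfolding DD_def Complex_eq by simp
qed

lemma DD_db: "((\<lambda>s. DD l a s) has_real_derivative (real l * CC (l - 1) a b)) (at b)"
proof -
  have "((\<lambda>w. (of_real a + \<i> * w) ^ l) has_field_derivative
      (of_nat l * (of_real a + \<i> * of_real b) ^ (l - 1) * \<i>)) (at (of_real b))"
    by (auto intro!: derivative_eq_intros)
  then have "((\<lambda>s. (of_real a + \<i> * of_real s) ^ l) has_vector_derivative
      (of_nat l * (of_real a + \<i> * of_real b) ^ (l - 1) * \<i>)) (at b)"
    by (rule has_vector_derivative_real_field)
  then have "((\<lambda>s. Im ((of_real a + \<i> * of_real s) ^ l)) has_field_derivative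
      Im (of_nat l * (of_real a + \<i> * of_real b) ^ (l - 1) * \<i>)) (at b)"
    by (rule has_field_derivative_Im)
  then show ?thesis unfolding CC_def DD_def Complex_eq by simp
qed

lemma cheb_T_CC:
  assumes rho: "rho = sqrt (a^2 + b^2)" "rho > 0" and c: "c * rho = a"
  shows "rho ^ l * poly (chebT l) c = CC l a b"
proof (induction l rule: chebT.induct)
  case 1 then show ?case by simp
next
  case 2 then show ?case using c by (simp add: CC_Suc mult.commute)
next
  case (3 k)
  have r2: "rho^2 = a^2 + b^2" using rho by simp
  have "rho ^ Suc (Suc k) * poly (chebT (Suc (Suc k))) c
      = 2 * (c * rho) * (rho ^ Suc k * poly (chebT (Suc k)) c) - rho^2 * (rho ^ k * poly (chebT k) c)"
    by (simp add: algebra_simps power2_eq_square)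
  also have "\<dots> = 2 * a * CC (Suc k) a b - (a^2 + b^2) * CC k a b"
    using 3 c r2 by simp
  finally show ?case by (simp add: CC_rec)
qed

lemma cheb_U_DD:
  assumes rho: "rho = sqrt (a^2 + b^2)" "rho > 0" and c: "c * rho = a"
  shows "rho ^ Suc l * (b / rho) * poly (chebU l) c = DD (Suc l) a b"
proof (induction l rule: chebU.induct)
  case 1 then show ?case using rho by (simp add: DD_Suc)
next
  case 2
  have "rho ^ Suc (Suc 0) * (b / rho) * poly (chebU (Suc 0)) c = 2 * b * (c * rho)"
    using rho(2) by (simp add: power2_eq_square field_simps)
  then show ?case using c by (simp add: DD_Suc CC_Suc)
next
  case (3 k)
  have r2: "rho^2 = a^2 + b^2" using rho by simp
  have "rho ^ Suc (Suc (Suc k)) * (b / rho) * poly (chebU (Suc (Suc k))) c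
      = 2 * (c * rho) * (rho ^ Suc (Suc k) * (b / rho) * poly (chebU (Suc k)) c) - rho^2 * (rho ^ Suc k * (b / rho) * poly (chebU k) c)"
    by (simp add: algebra_simps power2_eq_square)
  also have "\<dots> = 2 * a * DD (Suc (Suc k)) a b - (a^2 + b^2) * DD (Suc k) a b"
    using 3 c r2 by simp
  finally show ?case by (simp add: DD_rec)
qed


lemma Cpoly:
  assumes "1 \<le> m" "m \<le> Suc n"
  shows "2 * real m * poly (PD m (Suc n)) t - (1 - t^2) * poly (PD (Suc m) n) t
       = (real (Suc n) + real m) * (real n + real m) * poly (PD (m - 1) n) t"
proof -
  obtain m' where m: "m = Suc m'" using assms(1) by (cases m) auto
  have I: "poly (PD (Suc m') (Suc n)) t - t * poly (PD (Suc m') n) t - real m' * poly (PD m' n) t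
     = (real n + 1) * poly (PD m' n) t" by (rule I2j)
  show ?thesis
  proof (cases n)
    case 0
    then have m0: "m' = 0" using assms m by simp
    have z1: "PD (Suc 0) 0 = 0" by (rule PD_high) simp
    have z2: "PD (Suc (Suc 0)) 0 = 0" by (rule PD_high) simp
    have I0: "poly (PD (Suc 0) (Suc 0)) t - t * poly (PD (Suc 0) 0) t - 0
     = 1 * poly (PD 0 0) t" using I unfolding 0 m0 by simp
    show ?thesis unfolding m m0 0 using I0 z1 z2 by simp
  next
    case (Suc n')
    have A: "(real (Suc n') - real (Suc m')) * t * poly (PD (Suc m') (Suc n')) t
        + (1 - t^2) * poly (PD (Suc (Suc m')) (Suc n')) t
        = (real (Suc n') + real (Suc m')) * poly (PD (Suc m') n') t" by (rule Aj)
    have B: "t * poly (PD (Suc m') (Suc n')) t + real m' * poly (PD m' (Suc n')) t - poly (PD (Suc m') n') t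
     = (real n' + 1) * poly (PD m' (Suc n')) t" by (rule Bj)
    define a where "a = poly (PD (Suc m') (Suc (Suc n'))) t"
    define b where "b = poly (PD (Suc m') (Suc n')) t"
    define c where "c = poly (PD m' (Suc n')) t"
    define d where "d = poly (PD (Suc (Suc m')) (Suc n')) t"
    define e where "e = poly (PD (Suc m') n') t"
    have I': "a - t * b - real m' * c = (real n' + 2) * c"
      using I unfolding Suc a_def b_def c_def by simp
    have A': "(real n' - real m') * t * b + (1 - t^2) * d = (real n' + real m' + 2) * e"
      using A unfolding b_def d_def e_def by simp
    have B': "t * b + real m' * c - e = (real n' + 1) * c"
      using B unfolding b_def c_def e_def by simp
    have "2 * (real m' + 1) * a - (1 - t^2) * d = (real n' + real m' + 3) * (real n' + real m' + 2) * c"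
      using I' A' B' by algebra
    then show ?thesis unfolding m Suc a_def b_def c_def d_def e_def by (simp add: algebra_simps)
  qed
qed

lemma sph_r_pos: "(x0, x1, x2) \<noteq> (0, 0, 0) \<Longrightarrow> sph_r x0 x1 x2 > 0"
proof -
  assume "(x0, x1, x2) \<noteq> (0, 0, 0)"
  then have d: "x0 \<noteq> 0 \<or> x1 \<noteq> 0 \<or> x2 \<noteq> 0" by auto
  have n: "x0^2 \<ge> 0" "x1^2 \<ge> 0" "x2^2 \<ge> 0" by simp_all
  have "x0^2 + x1^2 + x2^2 > 0"
  proof -
    consider "x0 \<noteq> 0" | "x1 \<noteq> 0" | "x2 \<noteq> 0" using d by blast
    then show ?thesis
    proof cases
      case 1 then have "x0^2 > 0" by simp
      then show ?thesis using n by linarith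
    next
      case 2 then have "x1^2 > 0" by simp
      then show ?thesis using n by linarith
    next
      case 3 then have "x2^2 > 0" by simp
      then show ?thesis using n by linarith
    qed
  qed
  then show ?thesis unfolding sph_r_def by simp
qed

lemma abs_x0_le: "\<bar>x0\<bar> \<le> sph_r x0 x1 x2"
proof -
  have "sqrt (x0^2) \<le> sqrt (x0^2 + x1^2 + x2^2)" by (rule real_sqrt_le_mono) simp
  then show ?thesis unfolding sph_r_def by simp
qed

lemma cos_th1: "sph_r x0 x1 x2 > 0 \<Longrightarrow> cos (sph_theta1 x0 x1 x2) = x0 / sph_r x0 x1 x2"
proof -
  assume p: "sph_r x0 x1 x2 > 0"
  have a: "- sph_r x0 x1 x2 \<le> x0" "x0 \<le> sph_r x0 x1 x2" using abs_x0_le[of x0 x1 x2] by (simp_all add: abs_le_iff)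
  have "-1 \<le> x0 / sph_r x0 x1 x2" using a p by (simp add: pos_le_divide_eq)
  moreover have "x0 / sph_r x0 x1 x2 \<le> 1" using a p by (simp add: pos_divide_le_eq)
  ultimately show ?thesis unfolding sph_theta1_def by (rule cos_arccos)
qed

lemma sqrt_th1: "sph_r x0 x1 x2 > 0 \<Longrightarrow>
   sqrt (1 - (x0 / sph_r x0 x1 x2)^2) = sqrt (x1^2 + x2^2) / sph_r x0 x1 x2"
proof -
  assume p: "sph_r x0 x1 x2 > 0"
  define r where "r = sph_r x0 x1 x2"
  have r2: "r^2 = x0^2 + x1^2 + x2^2" unfolding r_def sph_r_def by simp
  have e1: "x1^2 + x2^2 = r^2 - x0^2" using r2 by simp
  have "1 - (x0 / r)^2 = (x1^2 + x2^2) / r^2" unfolding e1 using p unfolding r_def[symmetric]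
    by (simp add: power_divide diff_divide_distrib)
  then have "sqrt (1 - (x0 / r)^2) = sqrt (x1^2 + x2^2) / sqrt (r^2)" by (simp add: real_sqrt_divide)
  then show ?thesis using p unfolding r_def by simp
qed

lemma th2_trig:
  assumes rho: "rho = sqrt (x1^2 + x2^2)" "rho > 0"
  shows "cos (sph_theta2 x0 x1 x2) = x1 / rho \<and> sin (sph_theta2 x0 x1 x2) = x2 / rho"
proof -
  define c where "c = x1 / rho"
  have r2: "rho^2 = x1^2 + x2^2" using rho by simp
  have "\<bar>x1\<bar> \<le> rho"
  proof -
    have "sqrt (x1^2) \<le> sqrt (x1^2 + x2^2)" by (rule real_sqrt_le_mono) simp
    then show ?thesis using rho by simp
  qed
  then have c1: "-1 \<le> c" "c \<le> 1" using rho(2) unfolding c_def by (auto simp: abs_le_iff field_simps)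
  have cc: "cos (arccos c) = c" using c1 by (rule cos_arccos)
  have e1: "x2^2 = rho^2 - x1^2" using r2 by simp
  have "1 - c^2 = (x2 / rho)^2" unfolding c_def power_divide e1 using rho(2)
    by (simp add: diff_divide_distrib)
  then have sc: "sin (arccos c) = \<bar>x2\<bar> / rho" using c1 rho(2) by (simp add: sin_arccos real_sqrt_abs)
  have th: "sph_theta2 x0 x1 x2 = (if x2 > 0 then arccos c else 2 * pi - arccos c)"
    unfolding sph_theta2_def Let_def c_def rho(1) by simp
  show ?thesis
  proof (cases "x2 > 0")
    case True then show ?thesis using th cc sc unfolding c_def by simp
  next
    case False then show ?thesis using th cc sc unfolding c_def by (simp add: sin_diff cos_diff)
  qed
qed


lemma CC_00: "l \<noteq> 0 \<Longrightarrow> CC l 0 0 = 0"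
  by (cases l) (simp_all add: CC_Suc)

lemma DD_00: "DD l 0 0 = 0"
  by (cases l) (simp_all add: DD_Suc)

lemma solidU_nz:
  assumes nz: "(x0, x1, x2) \<noteq> (0, 0, 0)"
  shows "solidU l N x0 x1 x2 = CC l x1 x2 * G N l x0 x1 x2"
proof -
  define r where "r = sph_r x0 x1 x2"
  define rho where "rho = sqrt (x1^2 + x2^2)"
  define t where "t = x0 / r"
  have p: "r > 0" using sph_r_pos[OF nz] r_def by simp
  have sU: "solidU l N x0 x1 x2 = r ^ N * ((rho / r) ^ l * poly (PD l N) t) * poly (chebT l) (cos (sph_theta2 x0 x1 x2))"
    unfolding solidU_def SU_def assoc_legendre_def r_def[symmetric]
    using cos_th1[of x0 x1 x2] sqrt_th1[of x0 x1 x2] p unfolding r_def[symmetric] t_def rho_def by simp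
  have g: "G N l x0 x1 x2 = r ^ (N - l) * poly (PD l N) t" unfolding G_def r_def t_def ..
  show ?thesis
  proof (cases "l \<le> N")
    case False
    then have "PD l N = 0" by (intro PD_high) simp
    then show ?thesis using sU g by simp
  next
    case lN: True
    have rN: "r ^ N = r ^ (N - l) * r ^ l" using lN by (simp add: power_add[symmetric])
    have rl: "r ^ N * (rho / r) ^ l = r ^ (N - l) * rho ^ l"
      unfolding rN using p by (simp add: power_divide)
    have ch: "rho ^ l * poly (chebT l) (cos (sph_theta2 x0 x1 x2)) = CC l x1 x2"
    proof (cases "rho = 0")
      case True
      then have "x1 = 0" "x2 = 0" unfolding rho_def by (auto simp: add_nonneg_eq_0_iff)
      then show ?thesis using True by (cases l) (simp_all add: CC_Suc)
    next
      case False
      moreover have "rho \<ge> 0" unfolding rho_def by simp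
      ultimately have rp: "rho > 0" by simp
      have "cos (sph_theta2 x0 x1 x2) = x1 / rho" using th2_trig[OF rho_def rp] by simp
      moreover have "(x1 / rho) * rho = x1" using rp by simp
      ultimately show ?thesis using cheb_T_CC[OF rho_def rp, of "x1/rho" l] by simp
    qed
    have "solidU l N x0 x1 x2 = (r ^ N * (rho / r) ^ l) * poly (PD l N) t * poly (chebT l) (cos (sph_theta2 x0 x1 x2))"
      using sU by (simp only: mult.assoc)
    also have "\<dots> = (r ^ (N - l) * rho ^ l) * poly (PD l N) t * poly (chebT l) (cos (sph_theta2 x0 x1 x2))"
      by (simp only: rl)
    also have "\<dots> = (r ^ (N - l) * poly (PD l N) t) * (rho ^ l * poly (chebT l) (cos (sph_theta2 x0 x1 x2)))"
      by (simp only: mult_ac)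
    finally show ?thesis using g ch by (simp only: mult_ac)
  qed
qed

lemma solidV_nz:
  assumes nz: "(x0, x1, x2) \<noteq> (0, 0, 0)"
  shows "solidV m N x0 x1 x2 = DD m x1 x2 * G N m x0 x1 x2"
proof (cases m)
  case 0
  then show ?thesis unfolding solidV_def SV_def by simp
next
  case (Suc k)
  define r where "r = sph_r x0 x1 x2"
  define rho where "rho = sqrt (x1^2 + x2^2)"
  define t where "t = x0 / r"
  define th2 where "th2 = sph_theta2 x0 x1 x2"
  have p: "r > 0" using sph_r_pos[OF nz] r_def by simp
  have sV: "solidV m N x0 x1 x2 = r ^ N * ((rho / r) ^ m * poly (PD m N) t) * sin th2 * poly (chebU k) (cos th2)"
    unfolding solidV_def SV_def assoc_legendre_def r_def[symmetric] th2_def[symmetric]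
    using cos_th1[of x0 x1 x2] sqrt_th1[of x0 x1 x2] p Suc unfolding r_def[symmetric] t_def rho_def by simp
  have g: "G N m x0 x1 x2 = r ^ (N - m) * poly (PD m N) t" unfolding G_def r_def t_def ..
  show ?thesis
  proof (cases "m \<le> N")
    case False
    then have "PD m N = 0" by (intro PD_high) simp
    then show ?thesis using sV g by simp
  next
    case lN: True
    have rN: "r ^ N = r ^ (N - m) * r ^ m" using lN by (simp add: power_add[symmetric])
    have rl: "r ^ N * (rho / r) ^ m = r ^ (N - m) * rho ^ m"
      unfolding rN using p by (simp add: power_divide)
    have ch: "rho ^ m * sin th2 * poly (chebU k) (cos th2) = DD m x1 x2"
    proof (cases "rho = 0")
      case True
      then have "x1 = 0" "x2 = 0" unfolding rho_def by (auto simp: add_nonneg_eq_0_iff)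
      then show ?thesis using True Suc by (simp add: DD_00)
    next
      case False
      moreover have "rho \<ge> 0" unfolding rho_def by simp
      ultimately have rp: "rho > 0" by simp
      have tr: "cos th2 = x1 / rho" "sin th2 = x2 / rho" using th2_trig[OF rho_def rp] th2_def by simp_all
      moreover have "(x1 / rho) * rho = x1" using rp by simp
      ultimately show ?thesis using cheb_U_DD[OF rho_def rp, of "x1/rho" k] Suc by simp
    qed
    have "solidV m N x0 x1 x2 = r ^ N * (rho / r) ^ m * poly (PD m N) t * (sin th2 * poly (chebU k) (cos th2))"
      using sV by (simp only: mult.assoc)
    also have "\<dots> = r ^ (N - m) * poly (PD m N) t * (rho ^ m * sin th2 * poly (chebU k) (cos th2))"
      unfolding rl by (simp only: mult_ac)
    finally have "solidV m N x0 x1 x2 = (r ^ (N - m) * poly (PD m N) t) * (rho ^ m * sin th2 * poly (chebU k) (cos th2))"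
      by (simp only: mult.assoc)
    then show ?thesis unfolding g ch by (simp only: mult.commute)
  qed
qed

lemma solidU_eq: "solidU l (Suc n) x0 x1 x2 = CC l x1 x2 * G (Suc n) l x0 x1 x2"
proof (cases "(x0, x1, x2) = (0, 0, 0)")
  case False then show ?thesis by (rule solidU_nz)
next
  case True
  then have z: "x0 = 0" "x1 = 0" "x2 = 0" by auto
  have r0: "sph_r 0 0 0 = 0" unfolding sph_r_def by simp
  show ?thesis
  proof (cases "l = 0")
    case True then show ?thesis unfolding z solidU_def G_def r0 by simp
  next
    case False then show ?thesis unfolding z solidU_def r0 by (simp add: CC_00)
  qed
qed

lemma solidV_eq: "solidV m (Suc n) x0 x1 x2 = DD m x1 x2 * G (Suc n) m x0 x1 x2"
proof (cases "(x0, x1, x2) = (0, 0, 0)")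
  case False then show ?thesis by (rule solidV_nz)
next
  case True
  then have z: "x0 = 0" "x1 = 0" "x2 = 0" by auto
  have r0: "sph_r 0 0 0 = 0" unfolding sph_r_def by simp
  show ?thesis unfolding z solidV_def r0 by (simp add: DD_00)
qed


lemma GC:
  assumes nz: "(x0, x1, x2) \<noteq> (0, 0, 0)" and m: "1 \<le> m" "m \<le> Suc n"
  shows "2 * real m * G (Suc n) m x0 x1 x2
     = (x1^2 + x2^2) * G n (Suc m) x0 x1 x2 + (real (Suc n) + real m) * (real n + real m) * G n (m - 1) x0 x1 x2"
proof -
  define r where "r = sph_r x0 x1 x2"
  define t where "t = x0 / r"
  have p: "r > 0" using sph_r_pos[OF nz] r_def by simp
  have r2: "r^2 = x0^2 + x1^2 + x2^2" unfolding r_def sph_r_def by simp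
  have e: "r^2 * (1 - t^2) = r^2 - x0^2" using p unfolding t_def by (simp add: power_divide right_diff_distrib)
  have rho2: "x1^2 + x2^2 = r^2 * (1 - t^2)" using e r2 by linarith
  have C: "2 * real m * poly (PD m (Suc n)) t - (1 - t^2) * poly (PD (Suc m) n) t
       = (real (Suc n) + real m) * (real n + real m) * poly (PD (m - 1) n) t" by (rule Cpoly[OF m])
  have g1: "G (Suc n) m x0 x1 x2 = r ^ (Suc n - m) * poly (PD m (Suc n)) t" unfolding G_def r_def t_def ..
  have g3: "G n (m - 1) x0 x1 x2 = r ^ (Suc n - m) * poly (PD (m - 1) n) t"
    using m unfolding G_def r_def[symmetric] t_def[symmetric] by (simp add: Suc_diff_le)
  have g2: "(x1^2 + x2^2) * G n (Suc m) x0 x1 x2 = r ^ (Suc n - m) * ((1 - t^2) * poly (PD (Suc m) n) t)"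
  proof (cases "Suc m \<le> n")
    case True
    then have "Suc n - m = Suc (Suc (n - Suc m))" by simp
    then show ?thesis unfolding rho2 G_def r_def[symmetric] t_def[symmetric] by (simp add: power2_eq_square)
  next
    case False
    have lt: "n < Suc m" using False by simp
    have "PD (Suc m) n = 0" by (rule PD_high[OF lt])
    then show ?thesis unfolding G_def by simp
  qed
  have "2 * real m * G (Suc n) m x0 x1 x2 - (x1^2 + x2^2) * G n (Suc m) x0 x1 x2
      = r ^ (Suc n - m) * (2 * real m * poly (PD m (Suc n)) t - (1 - t^2) * poly (PD (Suc m) n) t)"
    unfolding g1 g2 by (simp add: algebra_simps)
  also have "\<dots> = (real (Suc n) + real m) * (real n + real m) * G n (m - 1) x0 x1 x2"
    unfolding C g3 by (simp add: algebra_simps)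
  finally show ?thesis by simp
qed

lemma Dbar_U:
  assumes nz: "(x0, x1, x2) \<noteq> (0, 0, 0)" and l: "l \<le> Suc n"
  shows "Dbar (solidU l (Suc n)) x0 x1 x2 =
     (CC l x1 x2 * ((real (Suc n) + real l) * G n l x0 x1 x2),
      - (real l * CC (l - 1) x1 x2 * G (Suc n) l x0 x1 x2 + (- x1 * G n (Suc l) x0 x1 x2) * CC l x1 x2),
      - ((- real l * DD (l - 1) x1 x2) * G (Suc n) l x0 x1 x2 + (- x2 * G n (Suc l) x0 x1 x2) * CC l x1 x2))"
proof -
  have pos: "sph_r x0 x1 x2 > 0" by (rule sph_r_pos[OF nz])
  have f: "solidU l (Suc n) = (\<lambda>a b c. CC l b c * G (Suc n) l a b c)" by (intro ext) (rule solidU_eq)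
  have d0: "((\<lambda>s. CC l x1 x2 * G (Suc n) l s x1 x2) has_real_derivative
      CC l x1 x2 * ((real (Suc n) + real l) * G n l x0 x1 x2)) (at x0)"
    by (rule DERIV_cmult[OF G_d0[OF pos l]])
  have d1: "((\<lambda>s. CC l s x2 * G (Suc n) l x0 s x2) has_real_derivative
      real l * CC (l - 1) x1 x2 * G (Suc n) l x0 x1 x2 + (- x1 * G n (Suc l) x0 x1 x2) * CC l x1 x2) (at x1)"
    by (rule DERIV_mult[OF CC_da G_d1[OF pos l]])
  have d2: "((\<lambda>s. CC l x1 s * G (Suc n) l x0 x1 s) has_real_derivative
      (- real l * DD (l - 1) x1 x2) * G (Suc n) l x0 x1 x2 + (- x2 * G n (Suc l) x0 x1 x2) * CC l x1 x2) (at x2)"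
    by (rule DERIV_mult[OF CC_db G_d2[OF pos l]])
  show ?thesis unfolding Dbar_def f using DERIV_imp_deriv[OF d0] DERIV_imp_deriv[OF d1] DERIV_imp_deriv[OF d2]
    by simp
qed

lemma Dbar_V:
  assumes nz: "(x0, x1, x2) \<noteq> (0, 0, 0)" and l: "l \<le> Suc n"
  shows "Dbar (solidV l (Suc n)) x0 x1 x2 =
     (DD l x1 x2 * ((real (Suc n) + real l) * G n l x0 x1 x2),
      - (real l * DD (l - 1) x1 x2 * G (Suc n) l x0 x1 x2 + (- x1 * G n (Suc l) x0 x1 x2) * DD l x1 x2),
      - ((real l * CC (l - 1) x1 x2) * G (Suc n) l x0 x1 x2 + (- x2 * G n (Suc l) x0 x1 x2) * DD l x1 x2))"
proof -
  have pos: "sph_r x0 x1 x2 > 0" by (rule sph_r_pos[OF nz])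
  have f: "solidV l (Suc n) = (\<lambda>a b c. DD l b c * G (Suc n) l a b c)" by (intro ext) (rule solidV_eq)
  have d0: "((\<lambda>s. DD l x1 x2 * G (Suc n) l s x1 x2) has_real_derivative
      DD l x1 x2 * ((real (Suc n) + real l) * G n l x0 x1 x2)) (at x0)"
    by (rule DERIV_cmult[OF G_d0[OF pos l]])
  have d1: "((\<lambda>s. DD l s x2 * G (Suc n) l x0 s x2) has_real_derivative
      real l * DD (l - 1) x1 x2 * G (Suc n) l x0 x1 x2 + (- x1 * G n (Suc l) x0 x1 x2) * DD l x1 x2) (at x1)"
    by (rule DERIV_mult[OF DD_da G_d1[OF pos l]])
  have d2: "((\<lambda>s. DD l x1 s * G (Suc n) l x0 x1 s) has_real_derivative
      (real l * CC (l - 1) x1 x2) * G (Suc n) l x0 x1 x2 + (- x2 * G n (Suc l) x0 x1 x2) * DD l x1 x2) (at x2)"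
    by (rule DERIV_mult[OF DD_db G_d2[OF pos l]])
  show ?thesis unfolding Dbar_def f using DERIV_imp_deriv[OF d0] DERIV_imp_deriv[OF d1] DERIV_imp_deriv[OF d2]
    by simp
qed

lemma SU_scaled:
  assumes nz: "(x0, x1, x2) \<noteq> (0, 0, 0)"
  shows "sph_r x0 x1 x2 ^ n * SU l n (sph_theta1 x0 x1 x2) (sph_theta2 x0 x1 x2) = CC l x1 x2 * G n l x0 x1 x2"
  using solidU_nz[OF nz] unfolding solidU_def .

lemma SV_scaled:
  assumes nz: "(x0, x1, x2) \<noteq> (0, 0, 0)"
  shows "sph_r x0 x1 x2 ^ n * SV l n (sph_theta1 x0 x1 x2) (sph_theta2 x0 x1 x2) = DD l x1 x2 * G n l x0 x1 x2"
  using solidV_nz[OF nz] unfolding solidV_def .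


lemma CC_R1: "CC (Suc (Suc m)) a b = 2 * a * CC (Suc m) a b - (a^2 + b^2) * CC m a b"
  by (rule CC_rec)
lemma DD_R1: "DD (Suc (Suc m)) a b = 2 * a * DD (Suc m) a b - (a^2 + b^2) * DD m a b"
  by (rule DD_rec)
lemma DD_R2: "DD (Suc (Suc m)) a b - (a^2 + b^2) * DD m a b = 2 * b * CC (Suc m) a b"
  unfolding CC_Suc DD_Suc by (simp add: algebra_simps power2_eq_square)
lemma CC_R3: "CC (Suc (Suc m)) a b - (a^2 + b^2) * CC m a b = - 2 * b * DD (Suc m) a b"
  unfolding CC_Suc DD_Suc by (simp add: algebra_simps power2_eq_square)

theorem proposition1:
  fixes n :: nat and x0 x1 x2 :: real
  assumes "(x0, x1, x2) \<noteq> (0, 0, 0)"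
  defines "r \<equiv> sph_r x0 x1 x2"
      and "th1 \<equiv> sph_theta1 x0 x1 x2"
      and "th2 \<equiv> sph_theta2 x0 x1 x2"
  shows "Xdag 0 n x0 x1 x2 =
           r ^ n *\<^sub>R ((real n + 1) / 2 * SU 0 n th1 th2,
                          1/2 * SU 1 n th1 th2,
                          1/2 * SV 1 n th1 th2)
       \<and> (\<forall>m \<in> {1..n+1}.
            Xdag m n x0 x1 x2 =
              r ^ n *\<^sub>R ((real n + real m + 1) / 2 * SU m n th1 th2,
                 1/4 * (SU (m+1) n th1 th2 - (real n + real m + 1) * (real n + real m) * SU (m-1) n th1 th2),
                 1/4 * (SV (m+1) n th1 th2 + (real n + real m + 1) * (real n + real m) * SV (m-1) n th1 th2))
          \<and> Ydag m n x0 x1 x2 =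
              r ^ n *\<^sub>R ((real n + real m + 1) / 2 * SV m n th1 th2,
                 1/4 * (SV (m+1) n th1 th2 - (real n + real m + 1) * (real n + real m) * SV (m-1) n th1 th2),
                 - (1/4 * (SU (m+1) n th1 th2 + (real n + real m + 1) * (real n + real m) * SU (m-1) n th1 th2))))"
proof -
  note nz = assms(1)
  have SUs: "r ^ n * SU l n th1 th2 = CC l x1 x2 * G n l x0 x1 x2" for l
    using SU_scaled[OF nz] unfolding r_def th1_def th2_def .
  have SVs: "r ^ n * SV l n th1 th2 = DD l x1 x2 * G n l x0 x1 x2" for l
    using SV_scaled[OF nz] unfolding r_def th1_def th2_def .
  have part1: "Xdag 0 n x0 x1 x2 =
           r ^ n *\<^sub>R ((real n + 1) / 2 * SU 0 n th1 th2,
                          1/2 * SU 1 n th1 th2,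
                          1/2 * SV 1 n th1 th2)"
  proof -
    have X: "Xdag 0 n x0 x1 x2 = (1/2) *\<^sub>R Dbar (solidU 0 (Suc n)) x0 x1 x2" unfolding Xdag_def by simp
    have a: "r ^ n * ((real n + 1) / 2 * SU 0 n th1 th2) = (real n + 1) / 2 * G n 0 x0 x1 x2"
      using SUs[of 0] by (simp add: algebra_simps)
    have b: "r ^ n * (1/2 * SU 1 n th1 th2) = 1/2 * x1 * G n 1 x0 x1 x2"
      using SUs[of 1] by (simp add: algebra_simps CC_Suc)
    have c: "r ^ n * (1/2 * SV 1 n th1 th2) = 1/2 * x2 * G n 1 x0 x1 x2"
      using SVs[of 1] by (simp add: algebra_simps DD_Suc)
    show ?thesis unfolding X Dbar_U[OF nz, of 0 n, simplified] scaleR_Pair real_scaleR_def a b c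
      by (simp add: algebra_simps)
  qed
  have part2: "Xdag m n x0 x1 x2 =
              r ^ n *\<^sub>R ((real n + real m + 1) / 2 * SU m n th1 th2,
                 1/4 * (SU (m+1) n th1 th2 - (real n + real m + 1) * (real n + real m) * SU (m-1) n th1 th2),
                 1/4 * (SV (m+1) n th1 th2 + (real n + real m + 1) * (real n + real m) * SV (m-1) n th1 th2))
          \<and> Ydag m n x0 x1 x2 =
              r ^ n *\<^sub>R ((real n + real m + 1) / 2 * SV m n th1 th2,
                 1/4 * (SV (m+1) n th1 th2 - (real n + real m + 1) * (real n + real m) * SV (m-1) n th1 th2),
                 - (1/4 * (SU (m+1) n th1 th2 + (real n + real m + 1) * (real n + real m) * SU (m-1) n th1 th2)))"
    if m: "m \<in> {1..n+1}" for m
  proof -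
    have m1: "1 \<le> m" "m \<le> Suc n" using m by auto
    obtain m' where mm: "m = Suc m'" using m1 by (cases m) auto
    define K where "K = (real n + real m + 1) * (real n + real m)"
    define rho2 where "rho2 = x1^2 + x2^2"
    define gN where "gN = G (Suc n) m x0 x1 x2"
    define g0 where "g0 = G n m x0 x1 x2"
    define gp where "gp = G n (Suc m) x0 x1 x2"
    define gm where "gm = G n (m - 1) x0 x1 x2"
    define c0 where "c0 = CC (m - 1) x1 x2"
    define c1 where "c1 = CC m x1 x2"
    define c2 where "c2 = CC (Suc m) x1 x2"
    define d0 where "d0 = DD (m - 1) x1 x2"
    define d1 where "d1 = DD m x1 x2"
    define d2 where "d2 = DD (Suc m) x1 x2"
    have GCm: "2 * real m * gN = rho2 * gp + K * gm"
      using GC[OF nz m1] unfolding gN_def gp_def gm_def rho2_def K_def by (simp add: algebra_simps)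
    have R1: "c2 = 2 * x1 * c1 - rho2 * c0" unfolding c2_def c1_def c0_def rho2_def mm using CC_R1 by simp
    have R1': "d2 = 2 * x1 * d1 - rho2 * d0" unfolding d2_def d1_def d0_def rho2_def mm using DD_R1 by simp
    have R2: "d2 - rho2 * d0 = 2 * x2 * c1" unfolding d2_def c1_def d0_def rho2_def mm using DD_R2 by simp
    have R3: "c2 - rho2 * c0 = - 2 * x2 * d1" unfolding c2_def c0_def d1_def rho2_def mm using CC_R3 by simp
    have X: "Xdag m n x0 x1 x2 = (1/2) *\<^sub>R Dbar (solidU m (Suc n)) x0 x1 x2" unfolding Xdag_def by simp
    have Y: "Ydag m n x0 x1 x2 = (1/2) *\<^sub>R Dbar (solidV m (Suc n)) x0 x1 x2" unfolding Ydag_def by simp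
    have DU: "Dbar (solidU m (Suc n)) x0 x1 x2 =
       (c1 * ((real (Suc n) + real m) * g0), - (real m * c0 * gN + (- x1 * gp) * c1),
        - ((- real m * d0) * gN + (- x2 * gp) * c1))"
      unfolding c0_def c1_def d0_def g0_def gN_def gp_def by (rule Dbar_U[OF nz m1(2)])
    have DV: "Dbar (solidV m (Suc n)) x0 x1 x2 =
       (d1 * ((real (Suc n) + real m) * g0), - (real m * d0 * gN + (- x1 * gp) * d1),
        - ((real m * c0) * gN + (- x2 * gp) * d1))"
      unfolding c0_def d1_def d0_def g0_def gN_def gp_def by (rule Dbar_V[OF nz m1(2)])
    have Sm: "r ^ n * SU m n th1 th2 = c1 * g0" "r ^ n * SU (m+1) n th1 th2 = c2 * gp"
      "r ^ n * SU (m-1) n th1 th2 = c0 * gm"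
      "r ^ n * SV m n th1 th2 = d1 * g0" "r ^ n * SV (m+1) n th1 th2 = d2 * gp"
      "r ^ n * SV (m-1) n th1 th2 = d0 * gm"
      using SUs SVs unfolding c0_def c1_def c2_def d0_def d1_def d2_def g0_def gp_def gm_def by simp_all
    define u1 where "u1 = SU m n th1 th2"
    define u2 where "u2 = SU (m+1) n th1 th2"
    define u0 where "u0 = SU (m-1) n th1 th2"
    define v1 where "v1 = SV m n th1 th2"
    define v2 where "v2 = SV (m+1) n th1 th2"
    define v0 where "v0 = SV (m-1) n th1 th2"
    have S: "r ^ n * u1 = c1 * g0" "r ^ n * u2 = c2 * gp" "r ^ n * u0 = c0 * gm"
      "r ^ n * v1 = d1 * g0" "r ^ n * v2 = d2 * gp" "r ^ n * v0 = d0 * gm"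
      using Sm unfolding u0_def u1_def u2_def v0_def v1_def v2_def by simp_all
    have e1: "1/2 * (c1 * ((real (Suc n) + real m) * g0)) = r ^ n * ((real n + real m + 1) / 2 * u1)"
    proof -
      have "r ^ n * ((real n + real m + 1) / 2 * u1) = (real n + real m + 1) / 2 * (r ^ n * u1)"
        by (simp only: mult.left_commute)
      also have "\<dots> = (real n + real m + 1) / 2 * (c1 * g0)" by (simp only: S(1))
      finally show ?thesis by (simp add: algebra_simps)
    qed
    have e2: "1/2 * (- (real m * c0 * gN + (- x1 * gp) * c1)) = r ^ n * (1/4 * (u2 - K * u0))"
    proof -
      have "r ^ n * (1/4 * (u2 - K * u0)) = 1/4 * (r ^ n * u2 - K * (r ^ n * u0))"
        by algebra
      also have "\<dots> = 1/4 * (c2 * gp - K * (c0 * gm))" by (simp only: S(2) S(3))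
      also have "\<dots> = 1/2 * (- (real m * c0 * gN + (- x1 * gp) * c1))"
        using GCm R1 by algebra
      finally show ?thesis by simp
    qed
    have e3: "1/2 * (- ((- real m * d0) * gN + (- x2 * gp) * c1)) = r ^ n * (1/4 * (v2 + K * v0))"
    proof -
      have "r ^ n * (1/4 * (v2 + K * v0)) = 1/4 * (r ^ n * v2 + K * (r ^ n * v0))"
        by algebra
      also have "\<dots> = 1/4 * (d2 * gp + K * (d0 * gm))" by (simp only: S(5) S(6))
      also have "\<dots> = 1/2 * (- ((- real m * d0) * gN + (- x2 * gp) * c1))"
        using GCm R2 by algebra
      finally show ?thesis by simp
    qed
    have f1: "1/2 * (d1 * ((real (Suc n) + real m) * g0)) = r ^ n * ((real n + real m + 1) / 2 * v1)"
    proof -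
      have "r ^ n * ((real n + real m + 1) / 2 * v1) = (real n + real m + 1) / 2 * (r ^ n * v1)"
        by (simp only: mult.left_commute)
      also have "\<dots> = (real n + real m + 1) / 2 * (d1 * g0)" by (simp only: S(4))
      finally show ?thesis by (simp add: algebra_simps)
    qed
    have f2: "1/2 * (- (real m * d0 * gN + (- x1 * gp) * d1)) = r ^ n * (1/4 * (v2 - K * v0))"
    proof -
      have "r ^ n * (1/4 * (v2 - K * v0)) = 1/4 * (r ^ n * v2 - K * (r ^ n * v0))"
        by algebra
      also have "\<dots> = 1/4 * (d2 * gp - K * (d0 * gm))" by (simp only: S(5) S(6))
      also have "\<dots> = 1/2 * (- (real m * d0 * gN + (- x1 * gp) * d1))"
        using GCm R1' by algebra
      finally show ?thesis by simp
    qed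
    have f3: "1/2 * (- ((real m * c0) * gN + (- x2 * gp) * d1)) = r ^ n * (- (1/4 * (u2 + K * u0)))"
    proof -
      have "r ^ n * (- (1/4 * (u2 + K * u0))) = - (1/4 * (r ^ n * u2 + K * (r ^ n * u0)))"
        by algebra
      also have "\<dots> = - (1/4 * (c2 * gp + K * (c0 * gm)))" by (simp only: S(2) S(3))
      also have "\<dots> = 1/2 * (- ((real m * c0) * gN + (- x2 * gp) * d1))"
        using GCm R3 by algebra
      finally show ?thesis by simp
    qed
    show ?thesis
      unfolding X Y DU DV scaleR_Pair K_def[symmetric] u0_def[symmetric] u1_def[symmetric] u2_def[symmetric]
        v0_def[symmetric] v1_def[symmetric] v2_def[symmetric]
      using e1 e2 e3 f1 f2 f3 by simp
  qed
  show ?thesis using part1 part2 by blast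
qed


end
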